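(* Let $k$ and $N$ be positive integers. The inequality $$k^N \leqslant \binom{Nk-N-1}{N}$$ holds in each of the following cases: (1) $k \geqslant 5$ and $N \geqslant 3$; (2) $k \geqslant 4$ and $N \geqslant 4$; (3) $k \geqslant 3$ and $N \geqslant 9$. *)

theory Defs
  imports Main
begin

end

theory Submission
  imports Defs Complex_Main
begin

lemma choose_step: "(a choose Suc n) * Suc n = (a choose n) * (a - n)"
  using times_binomial_minus1_eq[of "Suc n" a] binomial_absorb_comp[of a n]
  by (simp add: mult.commute)

lemma choose_step_real:
  assumes "n \<le> a"
  shows "real (a choose Suc n) = real (a choose n) * (real a - real n) / (real n + 1)"
proof -
  have "real (a choose Suc n) * (real n + 1) = real (a choose n) * (real a - real n)"
    using arg_cong[OF choose_step[of a n], of real] assms by (simp add: of_nat_diff algebra_simps)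
  then show ?thesis by (simp add: field_simps)
qed

lemma ratio_bound:
  fixes a b :: nat
  assumes "b \<le> a" "0 < b"
  shows "real a ^ n * real (b choose n) \<le> real (a choose n) * real b ^ n"
proof (induction n)
  case 0 then show ?case by simp
next
  case (Suc n)
  show ?case
  proof (cases "b \<le> n")
    case True
    then have z: "real (b choose Suc n) = 0" by (simp add: binomial_eq_0)
    show ?thesis unfolding z by simp
  next
    case False
    then have nb: "n < b" by simp
    have A: "real (a choose Suc n) = real (a choose n) * (real a - real n) / (real n + 1)"
      using choose_step_real nb assms by simp
    have B: "real (b choose Suc n) = real (b choose n) * (real b - real n) / (real n + 1)"
      using choose_step_real nb by simp
    have k1: "real a * (real b - real n) \<le> real b * (real a - real n)"
      using assms by (simp add: algebra_simps mult_right_mono)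
    have p1: "0 \<le> real b - real n" using nb by simp
    have p2: "0 \<le> real a - real n" using nb assms by simp
    have "real a ^ Suc n * real (b choose Suc n)
        = (real a ^ n * real (b choose n)) * (real a * (real b - real n)) / (real n + 1)"
      by (simp add: B field_simps)
    also have "\<dots> \<le> (real (a choose n) * real b ^ n) * (real b * (real a - real n)) / (real n + 1)"
      by (intro divide_right_mono mult_mono Suc.IH k1) (use p1 p2 in auto)
    also have "\<dots> = real (a choose Suc n) * real b ^ Suc n"
      by (simp add: A field_simps)
    finally show ?thesis .
  qed
qed

lemma k_step:
  fixes k N :: nat
  assumes "k \<ge> 3" "N > 0" "k ^ N \<le> (N * k - N - 1) choose N"
  shows "(k+1) ^ N \<le> (N * (k+1) - N - 1) choose N"
proof -
  define a where "a = N * k - 1"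
  define b where "b = N * k - N - 1"
  have NK: "N * k \<ge> 3 * N" using assms by simp
  have ab: "b \<le> a" "0 < b" unfolding a_def b_def using assms(2) NK by (simp, linarith)
  have a1: "N * (k+1) - N - 1 = a" unfolding a_def by (simp add: algebra_simps)
  have NK1: "N + 1 \<le> N * k" "1 \<le> N * k" using NK assms(2) by linarith+
  have ra: "real a = real N * real k - 1" unfolding a_def using NK1
    by (simp add: of_nat_diff)
  have rb: "real b = real N * real k - real N - 1" unfolding b_def using NK1
    by (simp add: of_nat_diff)
  have key: "(real k + 1) * real b \<le> real k * real a"
    unfolding ra rb by (simp add: algebra_simps)
  have bpos: "0 < real b" using ab by simp
  have "(real k + 1) ^ N * real b ^ N = ((real k + 1) * real b) ^ N" by (simp add: power_mult_distrib)
  also have "\<dots> \<le> (real k * real a) ^ N" by (intro power_mono key) (use bpos in simp)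
  also have "\<dots> = real a ^ N * real k ^ N" by (simp add: power_mult_distrib)
  also have "\<dots> \<le> real a ^ N * real (b choose N)"
  proof -
    have "real (k ^ N) \<le> real (b choose N)" using assms(3) unfolding b_def by (simp only: of_nat_le_iff)
    then have "real k ^ N \<le> real (b choose N)" by simp
    then show ?thesis by (intro mult_left_mono) simp_all
  qed
  also have "\<dots> \<le> real (a choose N) * real b ^ N" by (rule ratio_bound[OF ab])
  finally have "(real k + 1) ^ N \<le> real (a choose N)"
    using bpos by (simp add: mult_le_cancel_right zero_less_power)
  then have "(k+1) ^ N \<le> a choose N"
    by (metis of_nat_1 of_nat_add of_nat_le_iff of_nat_power)
  then show ?thesis using a1 by simp
qed

lemma k_induct:
  fixes k0 k N :: nat
  assumes "k0 \<ge> 3" "N > 0" "k0 ^ N \<le> (N * k0 - N - 1) choose N" "k \<ge> k0"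
  shows "k ^ N \<le> (N * k - N - 1) choose N"
  using assms(4)
proof (induction k rule: dec_induct)
  case base then show ?case using assms by simp
next
  case (step m) then show ?case using k_step[of m N] assms by simp
qed

lemma R1: "real (Suc n choose Suc m) = real (Suc n) * real (n choose m) / real (Suc m)"
proof -
  have "real (Suc m) * real (Suc n choose Suc m) = real (Suc n) * real (n choose m)"
    using arg_cong[OF Suc_times_binomial[of m n], of real] by (simp only: of_nat_mult)
  then show ?thesis by (simp add: field_simps del: of_nat_Suc)
qed

lemma R2: "m \<le> n \<Longrightarrow> real (Suc n choose m) = real (Suc n) * real (n choose m) / (real (Suc n) - real m)"
proof -
  assume "m \<le> n"
  have "(Suc n - m) * (Suc n choose m) = Suc n * (n choose m)"
    using binomial_absorb_comp[of "Suc n" m] by simp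
  then have "(real (Suc n) - real m) * real (Suc n choose m) = real (Suc n) * real (n choose m)"
    using \<open>m \<le> n\<close> by (metis Suc_leD le_SucI of_nat_diff of_nat_mult)
  moreover have "real (Suc n) - real m > 0" using \<open>m \<le> n\<close> by simp
  ultimately show ?thesis by (simp add: field_simps del: of_nat_Suc)
qed


lemma G1: "N \<le> n \<Longrightarrow> real (Suc (Suc n) choose Suc N) =
   real (n+2) / real (N+1) * (real (n+1) / (real (n+1) - real N)) * real (n choose N)"
  apply (subst R1)
  apply (subst R2, simp)
  apply (simp del: of_nat_Suc add: mult_ac)
  done

lemma G2: "N \<le> n \<Longrightarrow> real (Suc (Suc (Suc n)) choose Suc N) =
   real (n+3) / real (N+1) * (real (n+2) / (real (n+2) - real N)) * (real (n+1) / (real (n+1) - real N)) * real (n choose N)"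
  apply (subst R1)
  apply (subst R2, simp)
  apply (subst R2, simp)
  apply (simp del: of_nat_Suc add: mult_ac)
  done

lemma G3: "N \<le> n \<Longrightarrow> real (Suc (Suc (Suc (Suc n))) choose Suc N) =
   real (Suc (Suc (Suc (Suc n)))) / real (N+1) * (real (Suc (Suc (Suc n))) / (real (Suc (Suc (Suc n))) - real N)) * (real (n+2) / (real (n+2) - real N)) * (real (n+1) / (real (n+1) - real N)) * real (n choose N)"
  apply (subst R1)
  apply (subst R2, simp)
  apply (subst R2, simp)
  apply (subst R2, simp)
  apply (simp del: of_nat_Suc add: mult_ac)
  done

lemma step_gen:
  fixes c r X Y :: real
  assumes "c \<le> r" "c ^ N \<le> X" "Y = r * X" "0 \<le> c"
  shows "c ^ Suc N \<le> Y"
proof -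
  have "c ^ Suc N = c * c ^ N" by simp
  also have "\<dots> \<le> r * X" by (rule mult_mono) (use assms in auto)
  finally show ?thesis using assms by simp
qed

lemma base3r: "N \<ge> 9 \<Longrightarrow> (3::real) ^ N \<le> real ((2 * N - 1) choose N)"
proof (induction N rule: dec_induct)
  case base
  have "(3::nat)^9 \<le> 17 choose 9" by (simp add: binomial_fact' fact_numeral)
  then have "real ((3::nat)^9) \<le> real (17 choose 9)" by (simp only: of_nat_le_iff)
  then show ?case by simp
next
  case (step N)
  define n where "n = 2 * N - 1"
  have Nn: "N \<le> n" and e: "2 * Suc N - 1 = Suc (Suc n)" and rn: "real n = 2 * real N - 1"
    using step(1) by (auto simp: n_def of_nat_diff)
  have r: "3 \<le> real (n+2) / real (N+1) * (real (n+1) / (real (n+1) - real N))"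
    using step(1) rn by (simp add: field_simps)
  show ?case unfolding e
    by (rule step_gen[OF r _ G1[OF Nn]]) (use step(3) in \<open>simp_all add: n_def\<close>)
qed

lemma base4r: "N \<ge> 4 \<Longrightarrow> (4::real) ^ N \<le> real ((3 * N - 1) choose N)"
proof (induction N rule: dec_induct)
  case base
  have "(4::nat)^4 \<le> 11 choose 4" by (simp add: binomial_fact' fact_numeral)
  then have "real ((4::nat)^4) \<le> real (11 choose 4)" by (simp only: of_nat_le_iff)
  then show ?case by simp
next
  case (step N)
  define n where "n = 3 * N - 1"
  have Nn: "N \<le> n" and e: "3 * Suc N - 1 = Suc (Suc (Suc n))" and rn: "real n = 3 * real N - 1"
    using step(1) by (auto simp: n_def of_nat_diff)
  have r: "4 \<le> real (n+3) / real (N+1) * (real (n+2) / (real (n+2) - real N)) * (real (n+1) / (real (n+1) - real N))"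
    using step(1) rn
  apply (simp add: field_simps)
  apply (subst le_divide_eq)
  apply (simp add: add_pos_nonneg)
  apply (subgoal_tac "real N * real n = 3*real N*real N - real N")
   apply (subgoal_tac "0 \<le> real N * real N")
    apply linarith
   apply simp
  apply (drule arg_cong[where f="\<lambda>x. real N * x"])
  apply (simp add: algebra_simps)
  done
  show ?case unfolding e
    by (rule step_gen[OF r _ G2[OF Nn]]) (use step(3) in \<open>simp_all add: n_def\<close>)
qed

lemma base5r: "N \<ge> 3 \<Longrightarrow> (5::real) ^ N \<le> real ((4 * N - 1) choose N)"
proof (induction N rule: dec_induct)
  case base
  have "(5::nat)^3 \<le> 11 choose 3" by (simp add: binomial_fact' fact_numeral)
  then have "real ((5::nat)^3) \<le> real (11 choose 3)" by (simp only: of_nat_le_iff)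
  then show ?case by simp
next
  case (step N)
  define n where "n = 4 * N - 1"
  have Nn: "N \<le> n" and e: "4 * Suc N - 1 = Suc (Suc (Suc (Suc n)))" and rn: "real n = 4 * real N - 1"
    using step(1) by (auto simp: n_def of_nat_diff)
  have r: "5 \<le> real (Suc (Suc (Suc (Suc n)))) / real (N+1) * (real (Suc (Suc (Suc n))) / (real (Suc (Suc (Suc n))) - real N)) * (real (n+2) / (real (n+2) - real N)) * (real (n+1) / (real (n+1) - real N))"
    using step(1) rn
  apply (simp add: field_simps)
  apply (subst le_divide_eq)
  apply (simp add: add_pos_nonneg)
  apply (subgoal_tac "(3::real) \<le> real N")
   apply (subgoal_tac "0 \<le> real N * (real N * real N)")
    apply (subgoal_tac "0 \<le> real N * real N")
     apply linarith
    apply simp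
   apply simp
  apply simp
  done
  show ?case unfolding e
    by (rule step_gen[OF r _ G3[OF Nn]]) (use step(3) in \<open>simp_all add: n_def\<close>)
qed


lemma to_nat: "real (c ^ N) \<le> real X \<Longrightarrow> c ^ N \<le> X"
  by (simp only: of_nat_le_iff)

theorem lemma4p4:
  fixes k N :: nat
  assumes "k > 0" and "N > 0"
    and "(k \<ge> 5 \<and> N \<ge> 3) \<or> (k \<ge> 4 \<and> N \<ge> 4) \<or> (k \<ge> 3 \<and> N \<ge> 9)"
  shows "k ^ N \<le> (N * k - N - 1) choose N"
  using assms(3)
proof (elim disjE conjE)
  assume k: "k \<ge> 5" and N: "N \<ge> 3"
  have "(5::nat) ^ N \<le> (N * 5 - N - 1) choose N"
    using base5r[OF N] by (intro to_nat) (simp add: mult.commute)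
  then show ?thesis using k_induct[of 5 N k] k assms(2) by simp
next
  assume k: "k \<ge> 4" and N: "N \<ge> 4"
  have "(4::nat) ^ N \<le> (N * 4 - N - 1) choose N"
    using base4r[OF N] by (intro to_nat) (simp add: mult.commute)
  then show ?thesis using k_induct[of 4 N k] k assms(2) by simp
next
  assume k: "k \<ge> 3" and N: "N \<ge> 9"
  have "(3::nat) ^ N \<le> (N * 3 - N - 1) choose N"
    using base3r[OF N] by (intro to_nat) (simp add: mult.commute)
  then show ?thesis using k_induct[of 3 N k] k assms(2) by simp
qed

end
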